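(* Let $\bm{X}$ be a centered $d$-dimensional random vector such that $|\bm{X}|\le M$ almost surely, for some $M>0$. Then, for any positive integers $n$ and $N$ with $N\ge 6dn$, if $\bm{X}_1,\dots,\bm{X}_N$ are i.i.d. copies of $\bm{X}$, \[ \mathbb{P}\!\left(\operatorname{dist}\!\left(\bm{0},\operatorname{conv}\{\bm{X}_1,\dots,\bm{X}_N\}\right)\le \frac{2M}{n}\right) > 1-2^{-d}. \]
   Context: $|\cdot|$ denotes the Euclidean norm on $\mathbb{R}^d$. For $A\subset\mathbb{R}^d$, $\operatorname{conv}A$ denotes the convex hull of $A$ (the set of all finite convex combinations of points of $A$), and $\operatorname{dist}(\bm\theta,\operatorname{conv}A):=\inf_{\bm a\in\operatorname{conv}A}|\bm\theta-\bm a|$. *)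

theory Defs
  imports "HOL-Probability.Probability"
begin

end

theory Submission
  imports Defs
begin

definition rho :: "nat set \<Rightarrow> (nat \<Rightarrow> 'd::euclidean_space) \<Rightarrow> real" where
  "rho J x = infdist 0 (convex hull (x ` J))"

lemma hull_weights:
  fixes x :: "nat \<Rightarrow> 'd::euclidean_space"
  assumes "finite J" "p \<in> convex hull (x ` J)"
  shows "\<exists>l. (\<forall>j\<in>J. 0 \<le> l j) \<and> sum l J = 1 \<and> p = (\<Sum>j\<in>J. l j *\<^sub>R x j)"
proof -
  let ?W = "{y. \<exists>l. (\<forall>j\<in>J. 0 \<le> l j) \<and> sum l J = 1 \<and> y = (\<Sum>j\<in>J. l j *\<^sub>R x j)}"
  have "x ` J \<subseteq> ?W"
  proof
    fix y assume "y \<in> x ` J" then obtain i where i: "i \<in> J" "y = x i" by auto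
    show "y \<in> ?W"
    proof (rule CollectI, rule exI[of _ "\<lambda>j. if j = i then 1 else 0"], intro conjI)
      have "(\<Sum>j\<in>J. (if j = i then 1 else 0) *\<^sub>R x j) = (\<Sum>j\<in>J. if j = i then x j else 0)"
        by (rule sum.cong) auto
      then show "y = (\<Sum>j\<in>J. (if j = i then 1 else 0) *\<^sub>R x j)" using i assms(1) by simp
    qed (use i assms(1) in auto)
  qed
  moreover have "convex ?W"
    unfolding convex_def
  proof (intro ballI allI impI)
    fix y1 y2 and u v :: real
    assume "y1 \<in> ?W" "y2 \<in> ?W" and uv: "0 \<le> u" "0 \<le> v" "u + v = 1"
    then obtain l1 l2 where l1: "\<forall>j\<in>J. 0 \<le> l1 j" "sum l1 J = 1" "y1 = (\<Sum>j\<in>J. l1 j *\<^sub>R x j)"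
      and l2: "\<forall>j\<in>J. 0 \<le> l2 j" "sum l2 J = 1" "y2 = (\<Sum>j\<in>J. l2 j *\<^sub>R x j)" by blast
    show "u *\<^sub>R y1 + v *\<^sub>R y2 \<in> ?W"
    proof (rule CollectI, rule exI[of _ "\<lambda>j. u * l1 j + v * l2 j"], intro conjI)
      show "\<forall>j\<in>J. 0 \<le> u * l1 j + v * l2 j" using l1 l2 uv by auto
      show "(\<Sum>j\<in>J. u * l1 j + v * l2 j) = 1"
        using l1 l2 uv by (simp add: sum.distrib sum_distrib_left[symmetric])
      show "u *\<^sub>R y1 + v *\<^sub>R y2 = (\<Sum>j\<in>J. (u * l1 j + v * l2 j) *\<^sub>R x j)"
        using l1 l2 by (simp add: scaleR_sum_right sum.distrib scaleR_add_left)
    qed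
  qed
  ultimately have "convex hull (x`J) \<subseteq> ?W" by (rule hull_minimal)
  with assms show ?thesis by blast
qed

lemma rho_nearest:
  fixes x :: "nat \<Rightarrow> 'd::euclidean_space"
  assumes "finite J" "J \<noteq> {}"
  obtains p where "p \<in> convex hull (x ` J)" "norm p = rho J x"
    "\<And>y. y \<in> convex hull (x ` J) \<Longrightarrow> norm p \<le> norm y"
proof -
  let ?C = "convex hull (x ` J)"
  have cl: "closed ?C" using assms by (intro compact_imp_closed compact_convex_hull finite_imp_compact) auto
  have ne: "?C \<noteq> {}" using assms by simp
  obtain p where p: "p \<in> ?C" "\<And>y. y \<in> ?C \<Longrightarrow> dist 0 p \<le> dist 0 y"
    using distance_attains_inf[OF cl ne, of 0] by blast
  have "infdist 0 ?C = norm p"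
  proof (rule antisym)
    show "infdist 0 ?C \<le> norm p" using infdist_le[OF p(1), of 0] by simp
    show "norm p \<le> infdist 0 ?C"
      unfolding infdist_def using ne p(2) by (auto intro!: cINF_greatest)
  qed
  then show ?thesis using p that unfolding rho_def by force
qed

lemma rho_le:
  fixes x :: "nat \<Rightarrow> 'd::euclidean_space"
  assumes "y \<in> convex hull (x ` J)"
  shows "rho J x \<le> norm y"
  using infdist_le[OF assms, of 0] by (simp add: rho_def)

lemma rho_mono:
  fixes x :: "nat \<Rightarrow> 'd::euclidean_space"
  assumes "J \<subseteq> I" "J \<noteq> {}"
  shows "rho I x \<le> rho J x"
  unfolding rho_def using assms by (intro infdist_mono hull_mono) auto

lemma rho_nonneg: "0 \<le> rho J x"
  by (simp add: rho_def infdist_nonneg)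

lemma key_halfspace:
  fixes x :: "nat \<Rightarrow> 'd::euclidean_space"
  assumes "J \<subseteq> I" "rho J x \<le> rho I x" "p \<in> convex hull (x ` J)" "norm p = rho J x" "i \<in> I"
    and fin: "finite I"
  shows "norm p ^ 2 \<le> inner p (x i)"
proof -
  let ?C = "convex hull (x ` I)"
  have cl: "closed ?C" using fin by (intro compact_imp_closed compact_convex_hull finite_imp_compact) auto
  have pC: "p \<in> ?C" using assms(1,3) hull_mono[of "x`J" "x`I"] by auto
  have "\<forall>z\<in>?C. dist 0 p \<le> dist 0 z"
    using assms(2,4) rho_le[of _ x I] by (metis dist_0_norm order_trans)
  moreover have "x i \<in> ?C" using assms(5) by (simp add: hull_inc)
  ultimately have "inner (0 - p) (x i - p) \<le> 0"
    using any_closest_point_dot[of ?C p "x i" 0] pC cl by auto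
  then show ?thesis by (simp add: inner_diff_right power2_norm_eq_inner)
qed

lemma carath_idx:
  fixes x :: "nat \<Rightarrow> 'd::euclidean_space"
  assumes "finite I" "I \<noteq> {}"
  obtains T where "T \<subseteq> I" "T \<noteq> {}" "card T \<le> DIM('d) + 1" "rho T x \<le> rho I x"
proof -
  obtain p where p: "p \<in> convex hull (x ` I)" "norm p = rho I x"
    using rho_nearest[OF assms, of x] by blast
  then obtain S where S: "finite S" "S \<subseteq> x ` I" "card S \<le> DIM('d) + 1" "p \<in> convex hull S"
    using caratheodory[of "x ` I"] by blast
  have "\<forall>y\<in>S. \<exists>i\<in>I. x i = y" using S(2) by auto
  then obtain f where f: "\<And>y. y \<in> S \<Longrightarrow> f y \<in> I \<and> x (f y) = y" by metis
  let ?T = "f ` S"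
  have xT: "x ` ?T = S" using f by force
  have "S \<noteq> {}" using S(4) by auto
  moreover have "card ?T \<le> DIM('d) + 1" using card_image_le[OF S(1), of f] S(3) by linarith
  moreover have "?T \<subseteq> I" using f by auto
  moreover have "rho ?T x \<le> rho I x" using rho_le[of p x ?T] xT S(4) p(2) by simp
  ultimately show ?thesis using that by blast
qed



definition Lam :: "nat set \<Rightarrow> (nat \<Rightarrow> real) set" where
  "Lam J = {l \<in> Pi\<^sub>E J (\<lambda>_. \<rat>). (\<forall>j\<in>J. 0 \<le> l j) \<and> sum l J = 1}"

lemma rat_approx:
  assumes fin: "finite J" and l: "\<forall>j\<in>J. 0 \<le> l j" "sum l J = 1" and d: "0 < \<delta>"
  shows "\<exists>l'\<in>Lam J. \<forall>j\<in>J. \<bar>l' j - l j\<bar> \<le> \<delta>"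
proof -
  have "\<exists>j0\<in>J. 0 < l j0"
  proof (rule ccontr)
    assume "\<not> ?thesis"
    then have "\<forall>j\<in>J. l j = 0" using l(1) by force
    then have "sum l J = 0" by simp
    then show False using l(2) by simp
  qed
  then obtain j0 where j0: "j0 \<in> J" "0 < l j0" by blast
  define c where "c = real (card J)"
  have "card J \<noteq> 0" using fin j0 by auto
  then have c1: "1 \<le> c" by (simp add: c_def)
  define \<eta> where "\<eta> = min \<delta> (l j0) / c"
  have eta: "0 < \<eta>" using d j0 c1 by (simp add: \<eta>_def)
  have "\<forall>j. \<exists>q\<in>\<rat>. l j < q \<and> q < l j + \<eta>"
    using Rats_dense_in_real eta by (metis less_add_same_cancel1)
  then obtain s where s: "\<And>j. s j \<in> \<rat>" "\<And>j. l j < s j" "\<And>j. s j < l j + \<eta>" by metis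
  define R where "R = J - {j0}"
  define l' where "l' = restrict (\<lambda>j. if j = j0 then 1 - sum s R else s j) J"
  have finR: "finite R" using fin by (simp add: R_def)
  have sumJ: "sum f J = f j0 + sum f R" for f :: "nat \<Rightarrow> real"
    using sum.remove[OF fin j0(1)] by (simp add: R_def)
  have dev: "sum (\<lambda>j. s j - l j) R \<le> c * \<eta>"
  proof -
    have "sum (\<lambda>j. s j - l j) R \<le> real (card R) * \<eta>"
      using sum_bounded_above[of R "\<lambda>j. s j - l j" \<eta>] s(3) by (simp add: less_imp_le algebra_simps)
    also have "\<dots> \<le> c * \<eta>" using eta fin by (auto simp: c_def R_def intro!: mult_right_mono card_mono)
    finally show ?thesis .
  qed
  have dev0: "0 \<le> sum (\<lambda>j. s j - l j) R" using s(2) by (intro sum_nonneg) (simp add: less_imp_le)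
  have ceta: "c * \<eta> = min \<delta> (l j0)" using c1 by (simp add: \<eta>_def)
  have l'j0: "l' j0 = l j0 - sum (\<lambda>j. s j - l j) R"
    using j0 sumJ[of l] l(2) by (simp add: l'_def sum_subtractf)
  show ?thesis
  proof (rule bexI[of _ l'], intro ballI)
    fix j assume j: "j \<in> J"
    show "\<bar>l' j - l j\<bar> \<le> \<delta>"
    proof (cases "j = j0")
      case True then show ?thesis using l'j0 dev dev0 ceta by auto
    next
      case False
      then have "l' j = s j" using j by (simp add: l'_def)
      moreover have "\<eta> \<le> \<delta>"
      proof -
        have "1 * \<eta> \<le> c * \<eta>" using c1 eta by (intro mult_right_mono) auto
        then show ?thesis using ceta by simp
      qed
      ultimately show ?thesis using s(2,3)[of j] by auto
    qed
  next
    show "l' \<in> Lam J"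
      unfolding Lam_def
    proof (intro CollectI conjI ballI)
      show "l' \<in> Pi\<^sub>E J (\<lambda>_. \<rat>)"
        using s(1) by (auto simp: l'_def intro!: Rats_diff Rats_sum)
    next
      fix j assume j: "j \<in> J"
      show "0 \<le> l' j"
      proof (cases "j = j0")
        case True then show ?thesis using l'j0 dev ceta by auto
      next
        case False then show ?thesis using j s(2)[of j] l(1) by (fastforce simp: l'_def)
      qed
    next
      have "sum l' J = l' j0 + sum l' R" by (rule sumJ)
      also have "sum l' R = sum s R" by (rule sum.cong) (auto simp: l'_def R_def)
      finally show "sum l' J = 1" using j0 by (simp add: l'_def)
    qed
  qed
qed

definition gl :: "nat set \<Rightarrow> (nat \<Rightarrow> real) \<Rightarrow> (nat \<Rightarrow> 'd::euclidean_space) \<Rightarrow> real" where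
  "gl J l x = norm (\<Sum>j\<in>J. l j *\<^sub>R x j)"

lemma rho_INF:
  fixes x :: "nat \<Rightarrow> 'd::euclidean_space"
  assumes fin: "finite J" and ne: "J \<noteq> {}"
  shows "rho J x = (INF l\<in>Lam J. gl J l x)"
proof -
  obtain p where p: "p \<in> convex hull (x ` J)" "norm p = rho J x"
    using rho_nearest[OF fin ne, of x] by blast
  obtain l where l: "\<forall>j\<in>J. 0 \<le> l j" "sum l J = 1" "p = (\<Sum>j\<in>J. l j *\<^sub>R x j)"
    using hull_weights[OF fin p(1)] by blast
  have Lne: "Lam J \<noteq> {}" using rat_approx[OF fin l(1,2), of 1] by auto
  have bdd: "bdd_below ((\<lambda>l. gl J l x) ` Lam J)"
    by (rule bdd_belowI[of _ 0]) (auto simp: gl_def)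
  have low: "rho J x \<le> gl J l' x" if "l' \<in> Lam J" for l'
  proof -
    have "(\<Sum>j\<in>J. l' j *\<^sub>R x j) \<in> convex hull (x ` J)"
      using that fin by (intro convex_sum) (auto simp: Lam_def hull_inc)
    then show ?thesis unfolding gl_def by (rule rho_le)
  qed
  show ?thesis
  proof (rule antisym)
    show "rho J x \<le> (INF l\<in>Lam J. gl J l x)" using Lne low by (intro cINF_greatest) auto
    show "(INF l\<in>Lam J. gl J l x) \<le> rho J x"
    proof (rule field_le_epsilon)
      fix e :: real assume e: "0 < e"
      define B where "B = (\<Sum>j\<in>J. norm (x j)) + 1"
      have "0 \<le> (\<Sum>j\<in>J. norm (x j))" by (simp add: sum_nonneg)
      then have B: "0 < B" unfolding B_def by linarith
      obtain l' where l': "l' \<in> Lam J" "\<And>j. j \<in> J \<Longrightarrow> \<bar>l' j - l j\<bar> \<le> e / B"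
        using rat_approx[OF fin l(1,2), of "e / B"] e B by auto
      have "gl J l' x = norm (p + (\<Sum>j\<in>J. (l' j - l j) *\<^sub>R x j))"
        unfolding gl_def l(3) by (simp add: sum.distrib[symmetric] scaleR_diff_left)
      also have "\<dots> \<le> norm p + norm (\<Sum>j\<in>J. (l' j - l j) *\<^sub>R x j)" by (rule norm_triangle_ineq)
      also have "norm (\<Sum>j\<in>J. (l' j - l j) *\<^sub>R x j) \<le> (\<Sum>j\<in>J. \<bar>l' j - l j\<bar> * norm (x j))"
        by (rule order_trans[OF norm_sum]) simp
      also have "\<dots> \<le> (\<Sum>j\<in>J. e / B * norm (x j))"
        using l'(2) by (intro sum_mono mult_right_mono) auto
      also have "\<dots> \<le> e"
      proof -
        have "(\<Sum>j\<in>J. e / B * norm (x j)) = e / B * (B - 1)" by (simp add: B_def sum_distrib_left)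
        also have "\<dots> \<le> e" using e B by (simp add: field_simps)
        finally show ?thesis .
      qed
      finally have "gl J l' x \<le> rho J x + e" using p(2) by simp
      moreover have "(INF l\<in>Lam J. gl J l x) \<le> gl J l' x" by (rule cINF_lower[OF bdd l'(1)])
      ultimately show "(INF l\<in>Lam J. gl J l x) \<le> rho J x + e" by simp
    qed
  qed
qed

lemma rho_measurable:
  assumes fin: "finite J" and ne: "J \<noteq> {}" and JI: "J \<subseteq> I"
  shows "rho J \<in> borel_measurable (Pi\<^sub>M I (\<lambda>_. (borel :: 'd::euclidean_space measure)))"
proof -
  have eq: "rho J = (\<lambda>x::nat\<Rightarrow>'d. INF l\<in>Lam J. gl J l x)" using rho_INF[OF fin ne] by auto
  have cnt: "countable (Lam J)"
    by (rule countable_subset[of _ "Pi\<^sub>E J (\<lambda>_. \<rat>)"]) (auto simp: Lam_def intro!: countable_PiE fin countable_rat)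
  have m: "gl J l \<in> borel_measurable (Pi\<^sub>M I (\<lambda>_. (borel :: 'd measure)))" for l
  proof -
    have "(\<lambda>x::nat\<Rightarrow>'d. l j *\<^sub>R x j) \<in> borel_measurable (Pi\<^sub>M I (\<lambda>_. borel))" if "j \<in> J" for j
      using that JI by (intro borel_measurable_scaleR borel_measurable_const measurable_component_singleton) auto
    then have "(\<lambda>x::nat\<Rightarrow>'d. \<Sum>j\<in>J. l j *\<^sub>R x j) \<in> borel_measurable (Pi\<^sub>M I (\<lambda>_. borel))"
      by (rule borel_measurable_sum)
    then show ?thesis unfolding gl_def by (rule borel_measurable_norm[THEN measurable_compose[rotated]])
  qed
  show ?thesis unfolding eq by (rule borel_measurable_cINF_real[OF cnt m])
qed



lemma E_bound:
  fixes \<mu> :: "'d::euclidean_space measure"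
  assumes mu: "prob_space \<mu>" "sets \<mu> = sets borel"
    and hs: "\<And>u. norm u = 1 \<Longrightarrow> measure \<mu> {y. r < inner u y} \<le> c"
    and r: "0 < r" and c: "0 \<le> c"
    and fin: "finite I" and K: "K \<subseteq> I" "card K = m" and ne: "I - K \<noteq> {}"
  shows "measure (Pi\<^sub>M I (\<lambda>_. \<mu>)) {x \<in> space (Pi\<^sub>M I (\<lambda>_. \<mu>)). r < rho I x \<and> rho (I - K) x \<le> rho I x} \<le> c ^ m"
proof -
  interpret MU: prob_space \<mu> by (rule mu(1))
  interpret product_sigma_finite "\<lambda>_. \<mu>"
    unfolding product_sigma_finite_def using mu(1) by (simp add: prob_space_imp_sigma_finite)
  define J where "J = I - K"
  have finJ: "finite J" and finK: "finite K" using fin K by (auto simp: J_def intro: finite_subset)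
  have JK: "J \<inter> K = {}" "J \<union> K = I" using K by (auto simp: J_def)
  interpret PJ: prob_space "Pi\<^sub>M J (\<lambda>_. \<mu>)" by (rule prob_space_PiM) (use mu in auto)
  interpret PK: prob_space "Pi\<^sub>M K (\<lambda>_. \<mu>)" by (rule prob_space_PiM) (use mu in auto)
  interpret PI: prob_space "Pi\<^sub>M I (\<lambda>_. \<mu>)" by (rule prob_space_PiM) (use mu in auto)
  let ?Q = "Pi\<^sub>M I (\<lambda>_. \<mu>)"
  define E where "E = {x \<in> space ?Q. r < rho I x \<and> rho J x \<le> rho I x}"
  have setsQ: "sets ?Q = sets (Pi\<^sub>M I (\<lambda>_. (borel::'d measure)))" by (rule sets_PiM_cong) (auto simp: mu)
  have mI: "rho I \<in> borel_measurable ?Q"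
  proof -
    have "I \<noteq> {}" using ne by auto
    then show ?thesis using rho_measurable[OF fin _ order_refl] by (simp add: measurable_cong_sets[OF setsQ refl])
  qed
  have mJ: "rho J \<in> borel_measurable ?Q"
    using rho_measurable[OF finJ _ , of I] ne by (simp add: J_def measurable_cong_sets[OF setsQ refl])
  have Em: "E \<in> sets ?Q"
  proof -
    have "E = {x\<in>space ?Q. (\<lambda>_. r) x < rho I x} \<inter> {x\<in>space ?Q. rho J x \<le> rho I x}"
      unfolding E_def by auto
    then show ?thesis
      using borel_measurable_less[OF borel_measurable_const mI] borel_measurable_le[OF mJ mI] by auto
  qed
  let ?PP = "Pi\<^sub>M J (\<lambda>_. \<mu>) \<Otimes>\<^sub>M Pi\<^sub>M K (\<lambda>_. \<mu>)"
  have dm: "distr ?PP ?Q (merge J K) = ?Q" using distr_merge[OF JK(1) finJ finK] JK(2) by simp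
  have mm: "merge J K \<in> measurable ?PP ?Q" using measurable_merge[of J K "\<lambda>_. \<mu>"] JK(2) by simp
  define A where "A = merge J K -` E \<inter> space ?PP"
  have Am: "A \<in> sets ?PP" unfolding A_def using mm Em by (rule measurable_sets)
  have "emeasure ?Q E = emeasure ?PP A"
    unfolding A_def by (subst dm[symmetric]) (rule emeasure_distr[OF mm Em])
  also have "\<dots> = (\<integral>\<^sup>+a. emeasure (Pi\<^sub>M K (\<lambda>_. \<mu>)) (Pair a -` A) \<partial>Pi\<^sub>M J (\<lambda>_. \<mu>))"
    by (rule PK.emeasure_pair_measure_alt[OF Am])
  also have "\<dots> \<le> (\<integral>\<^sup>+a. ennreal (c ^ m) \<partial>Pi\<^sub>M J (\<lambda>_. \<mu>))"
  proof (rule nn_integral_mono)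
    fix a assume a: "a \<in> space (Pi\<^sub>M J (\<lambda>_. \<mu>))"
    have rhoJ: "rho J (merge J K (a, b)) = rho J a" for b
    proof -
      have "merge J K (a, b) ` J = a ` J" using JK(1) by (auto simp: image_def)
      then show ?thesis by (simp add: rho_def)
    qed
    show "emeasure (Pi\<^sub>M K (\<lambda>_. \<mu>)) (Pair a -` A) \<le> ennreal (c ^ m)"
    proof (cases "r < rho J a")
      case False
      have "Pair a -` A = {}"
      proof (rule ccontr)
        assume "Pair a -` A \<noteq> {}"
        then obtain b where "(a, b) \<in> A" by auto
        then have "merge J K (a, b) \<in> E" by (simp add: A_def)
        then have "r < rho I (merge J K (a, b))" by (simp add: E_def)
        moreover have "rho I (merge J K (a, b)) \<le> rho J (merge J K (a, b))"
          using ne by (intro rho_mono) (auto simp: J_def)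
        ultimately show False using False rhoJ by force
      qed
      then show ?thesis by simp
    next
      case True
      obtain p where p: "p \<in> convex hull (a ` J)" "norm p = rho J a"
        using rho_nearest[OF finJ, of a] ne by (auto simp: J_def)
      have np: "r < norm p" using True p(2) by simp
      define u where "u = p /\<^sub>R norm p"
      have "norm p \<noteq> 0" using np r by linarith
      then have nu: "norm u = 1" by (simp add: u_def)
      let ?S = "{y. r < inner u y}"
      have Sm: "?S \<in> sets \<mu>" unfolding mu(2) by measurable
      have sub: "Pair a -` A \<subseteq> Pi\<^sub>E K (\<lambda>_. ?S)"
      proof
        fix b assume b: "b \<in> Pair a -` A"
        then have bsp: "b \<in> space (Pi\<^sub>M K (\<lambda>_. \<mu>))" by (auto simp: A_def space_pair_measure split: if_splits)
        let ?x = "merge J K (a, b)"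
        have xE: "?x \<in> E" using b by (simp add: A_def)
        have xJ: "?x ` J = a ` J" using JK(1) by (auto simp: image_def)
        have hs': "norm p ^ 2 \<le> inner p (?x k)" if "k \<in> K" for k
        proof (rule key_halfspace[of J I])
          show "J \<subseteq> I" by (auto simp: J_def)
          show "rho J ?x \<le> rho I ?x" using xE by (simp add: E_def)
          show "p \<in> convex hull (?x ` J)" using p(1) xJ by simp
          show "norm p = rho J ?x" using p(2) rhoJ by simp
          show "k \<in> I" using that K by auto
          show "finite I" by (rule fin)
        qed
        show "b \<in> Pi\<^sub>E K (\<lambda>_. ?S)"
        proof -
          have "b \<in> extensional K" using bsp by (simp add: space_PiM PiE_def)
          moreover have "r < inner u (b k)" if k: "k \<in> K" for k
          proof -
            have "?x k = b k" using JK(1) k by simp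
            then have "norm p ^ 2 \<le> inner p (b k)" using hs'[OF k] by simp
            moreover have npos: "0 < norm p" using np r by linarith
            ultimately have "norm p \<le> inner p (b k) / norm p"
              by (simp add: power2_eq_square pos_le_divide_eq)
            then have "norm p \<le> inner u (b k)"
              by (simp add: u_def divide_inverse mult.commute)
            then show ?thesis using np by simp
          qed
          ultimately show ?thesis by (auto simp: PiE_def)
        qed
      qed
      have "emeasure (Pi\<^sub>M K (\<lambda>_. \<mu>)) (Pair a -` A) \<le> emeasure (Pi\<^sub>M K (\<lambda>_. \<mu>)) (Pi\<^sub>E K (\<lambda>_. ?S))"
        by (rule emeasure_mono[OF sub]) (use Sm finK in \<open>auto intro!: sets_PiM_I_finite\<close>)
      also have "\<dots> = (\<Prod>k\<in>K. emeasure \<mu> ?S)" using Sm finK by (subst emeasure_PiM) auto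
      also have "\<dots> = ennreal (measure \<mu> ?S) ^ m"
        using K(2) by (simp add: MU.emeasure_eq_measure)
      also have "\<dots> \<le> ennreal c ^ m"
        using hs[OF nu] by (intro power_mono) (auto simp: ennreal_leI)
      also have "\<dots> = ennreal (c ^ m)"
        using hs[OF nu] by (simp add: ennreal_power measure_nonneg order_trans[OF measure_nonneg])
      finally show ?thesis .
    qed
  qed
  also have "\<dots> = ennreal (c ^ m)" by (simp add: PJ.emeasure_space_1)
  finally have "emeasure ?Q E \<le> ennreal (c ^ m)" .
  then show ?thesis unfolding E_def J_def
    using c by (simp add: PI.emeasure_eq_measure)
qed



lemma F_bound:
  fixes \<mu> :: "'d::euclidean_space measure"
  assumes mu: "prob_space \<mu>" "sets \<mu> = sets borel"
    and hs: "\<And>u. norm u = 1 \<Longrightarrow> measure \<mu> {y. r < inner u y} \<le> c"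
    and r: "0 < r" and c: "0 \<le> c"
    and fin: "finite I" "card I = N" and mN: "m + (DIM('d) + 1) \<le> N"
  shows "real ((N - (DIM('d) + 1)) choose m) * measure (Pi\<^sub>M I (\<lambda>_. \<mu>)) {x\<in>space (Pi\<^sub>M I (\<lambda>_. \<mu>)). r < rho I x}
           \<le> real (N choose m) * c ^ m"
proof -
  let ?Q = "Pi\<^sub>M I (\<lambda>_. \<mu>)"
  let ?D = "DIM('d) + 1"
  interpret PI: prob_space ?Q by (rule prob_space_PiM) (use mu in auto)
  define KK where "KK = {K. K \<subseteq> I \<and> card K = m}"
  define E where "E K = {x \<in> space ?Q. r < rho I x \<and> rho (I - K) x \<le> rho I x}" for K
  define F where "F = {x\<in>space ?Q. r < rho I x}"
  have finKK: "finite KK" using fin(1) by (auto simp: KK_def)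
  have cardKK: "card KK = N choose m" using n_subsets[OF fin(1), of m] fin(2) by (simp add: KK_def)
  have Ine: "I \<noteq> {}" using fin mN by auto
  have setsQ: "sets ?Q = sets (Pi\<^sub>M I (\<lambda>_. (borel::'d measure)))" by (rule sets_PiM_cong) (auto simp: mu)
  have mI: "rho I \<in> borel_measurable ?Q"
    using rho_measurable[OF fin(1) Ine order_refl] by (simp add: measurable_cong_sets[OF setsQ refl])
  have Fm: "F \<in> sets ?Q" unfolding F_def using borel_measurable_less[OF borel_measurable_const mI] by simp
  have KI: "I - K \<noteq> {}" if "K \<in> KK" for K
  proof -
    have "card K < card I" using that fin mN by (auto simp: KK_def)
    then show ?thesis using that by (auto simp: KK_def)
  qed
  have Eb: "measure ?Q (E K) \<le> c ^ m" if "K \<in> KK" for K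
    unfolding E_def using E_bound[OF mu hs r c fin(1), of K m] that KI[OF that] by (auto simp: KK_def)
  have Em: "E K \<in> sets ?Q" if "K \<in> KK" for K
  proof -
    have "I - K \<subseteq> I" by auto
    then have mJ: "rho (I - K) \<in> borel_measurable ?Q"
      using rho_measurable[OF _ KI[OF that], of I] fin(1) by (simp add: measurable_cong_sets[OF setsQ refl])
    have "E K = {x\<in>space ?Q. (\<lambda>_. r) x < rho I x} \<inter> {x\<in>space ?Q. rho (I - K) x \<le> rho I x}"
      unfolding E_def by auto
    then show ?thesis
      using borel_measurable_less[OF borel_measurable_const mI] borel_measurable_le[OF mJ mI] by auto
  qed
  have pw: "real ((N - ?D) choose m) * indicator F x \<le> (\<Sum>K\<in>KK. indicator (E K) x)" if x: "x \<in> space ?Q" for x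
  proof (cases "x \<in> F")
    case False then show ?thesis by (simp add: sum_nonneg)
  next
    case True
    then have rx: "r < rho I x" by (simp add: F_def)
    obtain T where T: "T \<subseteq> I" "T \<noteq> {}" "card T \<le> ?D" "rho T x \<le> rho I x"
      using carath_idx[OF fin(1) Ine, of x] by blast
    have finIT: "finite (I - T)" using fin(1) by simp
    have cIT: "card (I - T) = N - card T" using card_Diff_subset[OF finite_subset[OF T(1) fin(1)] T(1)] fin(2) by simp
    have "N - ?D \<le> card (I - T)" using cIT T(3) by simp
    then obtain A where A: "A \<subseteq> I - T" "card A = N - ?D" "finite A"
      by (rule obtain_subset_with_card_n)
    let ?KT = "{K. K \<subseteq> A \<and> card K = m}"
    have "real ((N - ?D) choose m) = real (card ?KT)" using n_subsets[OF A(3), of m] A(2) by simp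
    also have "\<dots> \<le> real (card {K\<in>KK. x \<in> E K})"
      unfolding of_nat_le_iff
    proof (rule card_mono)
      show "finite {K\<in>KK. x \<in> E K}" using finKK by simp
      show "?KT \<subseteq> {K\<in>KK. x \<in> E K}"
      proof
        fix K assume K: "K \<in> ?KT"
        then have KT: "K \<subseteq> I - T" using A(1) by auto
        have "T \<subseteq> I - K" using KT T(1) by auto
        then have "rho (I - K) x \<le> rho T x" using T(2) by (rule rho_mono)
        then have "rho (I - K) x \<le> rho I x" using T(4) by simp
        then show "K \<in> {K\<in>KK. x \<in> E K}" using K KT x rx by (auto simp: KK_def E_def)
      qed
    qed
    also have "real (card {K\<in>KK. x \<in> E K}) = (\<Sum>K\<in>KK. indicator (E K) x)"
    proof -
      have "(\<Sum>K\<in>KK. indicator (E K) x :: real) = (\<Sum>K\<in>{K\<in>KK. x \<in> E K}. 1)"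
        unfolding sum.inter_filter[OF finKK] by (auto simp: indicator_def intro!: sum.cong)
      then show ?thesis by simp
    qed
    finally show ?thesis using True by simp
  qed
  have "real ((N - ?D) choose m) * measure ?Q F = integral\<^sup>L ?Q (\<lambda>x. real ((N - ?D) choose m) * indicator F x)"
    using Fm by simp
  also have "\<dots> \<le> integral\<^sup>L ?Q (\<lambda>x. \<Sum>K\<in>KK. indicator (E K) x)"
  proof (rule integral_mono)
    show "integrable ?Q (\<lambda>x. real ((N - ?D) choose m) * indicator F x)"
      using Fm by (intro integrable_mult_right integrable_real_indicator) (auto simp: PI.emeasure_eq_measure)
    show "integrable ?Q (\<lambda>x. (\<Sum>K\<in>KK. indicator (E K) x) :: real)"
      apply (rule Bochner_Integration.integrable_sum)
      apply (rule integrable_real_indicator)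
      using Em apply (auto simp: PI.emeasure_eq_measure)
      done
  qed (rule pw)
  also have "\<dots> = (\<Sum>K\<in>KK. measure ?Q (E K))"
    using Em by (subst Bochner_Integration.integral_sum) (auto simp: PI.emeasure_eq_measure intro!: sum.cong integrable_real_indicator)
  also have "\<dots> \<le> (\<Sum>K\<in>KK. c ^ m)" using Eb by (rule sum_mono)
  also have "\<dots> = real (N choose m) * c ^ m" using cardKK by simp
  finally show ?thesis unfolding F_def .
qed



lemma halfspace_prob:
  fixes X :: "'a \<Rightarrow> 'd::euclidean_space"
  assumes P: "prob_space P" and Xm: "X \<in> borel_measurable P" and Xi: "integrable P X"
    and X0: "integral\<^sup>L P X = 0" and Mp: "M > 0" and bnd: "AE \<omega> in P. norm (X \<omega>) \<le> M"
    and u: "norm u = 1" and r: "0 < r"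
  shows "measure (distr P borel X) {y. r < inner u y} \<le> M / (M + r)"
proof -
  interpret prob_space P by (rule P)
  let ?S = "{y::'d. r < inner u y}"
  have Sm: "?S \<in> sets borel" by measurable
  let ?A = "X -` ?S \<inter> space P"
  have Am: "?A \<in> sets P" using Xm Sm by (rule measurable_sets)
  have eq: "measure (distr P borel X) ?S = prob ?A" using Xm Sm by (rule measure_distr)
  let ?Z = "\<lambda>\<omega>. inner u (X \<omega>)"
  have Zi: "integrable P ?Z" using Xi by auto
  have Z0: "integral\<^sup>L P ?Z = 0" using X0 Xi by simp
  have ind_i: "integrable P (\<lambda>\<omega>. (r + M) * indicator ?A \<omega> - M)"
    using Am by (intro Bochner_Integration.integrable_diff integrable_mult_right integrable_real_indicator) (auto simp: emeasure_eq_measure)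
  have "AE \<omega> in P. (r + M) * indicator ?A \<omega> - M \<le> ?Z \<omega>"
    using bnd
  proof eventually_elim
    case (elim \<omega>)
    have "\<bar>?Z \<omega>\<bar> \<le> norm u * norm (X \<omega>)" by (rule Cauchy_Schwarz_ineq2)
    then have "-M \<le> ?Z \<omega>" using elim u by auto
    then show ?case by (cases "\<omega> \<in> ?A") (auto simp: indicator_def)
  qed
  then have "integral\<^sup>L P (\<lambda>\<omega>. (r + M) * indicator ?A \<omega> - M) \<le> integral\<^sup>L P ?Z"
    by (intro integral_mono_AE ind_i Zi)
  moreover have "integral\<^sup>L P (\<lambda>\<omega>. (r + M) * indicator ?A \<omega> - M) = (r + M) * prob ?A - M"
    using Am by (subst Bochner_Integration.integral_diff) (auto simp: prob_space emeasure_eq_measure)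
  ultimately have "(r + M) * prob ?A \<le> M" using Z0 by simp
  then have "prob ?A \<le> M / (M + r)" using Mp r by (simp add: field_simps)
  then show ?thesis using eq by simp
qed



lemma binom_step:
  assumes "3 * m \<le> 2 * a" "0 < a"
  shows "(a choose m) \<le> 3 * ((a - 1) choose m)"
proof -
  have "a * (a choose m) \<le> (3 * (a - m)) * (a choose m)"
    using assms by (intro mult_right_mono) auto
  also have "\<dots> = 3 * ((a - m) * (a choose m))" by simp
  also have "\<dots> = 3 * (a * ((a - 1) choose m))" by (simp add: binomial_absorb_comp)
  finally have "a * (a choose m) \<le> a * (3 * ((a - 1) choose m))" by simp
  then show ?thesis using assms(2) by simp
qed

lemma binom_iter:
  "3 * m + 2 * t \<le> 2 * N + 2 \<Longrightarrow> t \<le> N \<Longrightarrow> (N choose m) \<le> 3 ^ t * ((N - t) choose m)"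
proof (induction t)
  case 0 then show ?case by simp
next
  case (Suc t)
  have "(N choose m) \<le> 3 ^ t * ((N - t) choose m)" using Suc by simp
  also have "(N - t) choose m \<le> 3 * ((N - t - 1) choose m)"
    using Suc.prems by (intro binom_step) auto
  finally show ?case by (simp add: mult.assoc)
qed

lemma pow_ineq: "1 \<le> d \<Longrightarrow> 3 * 2 ^ d < (9::nat) ^ d"
proof (induction d)
  case 0 then show ?case by simp
next
  case (Suc d)
  show ?case
  proof (cases "d = 0")
    case True then show ?thesis by simp
  next
    case False
    then have "3 * 2 ^ d < (9::nat) ^ d" using Suc by simp
    then show ?thesis by simp
  qed
qed

lemma cn_bound:
  assumes "0 < n"
  shows "(real n / (real n + 2)) ^ n \<le> 1 / 3"
proof -
  have "1 + real n * (2 / real n) \<le> (1 + 2 / real n) ^ n"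
  proof (rule Bernoulli_inequality)
    have "0 \<le> 2 / real n" by simp
    then show "- 1 \<le> 2 / real n" by linarith
  qed
  then have "3 \<le> (1 + 2 / real n) ^ n" using assms by simp
  moreover have "real n / (real n + 2) = 1 / (1 + 2 / real n)" using assms by (simp add: field_simps)
  ultimately have e: "(real n / (real n + 2)) ^ n = 1 / (1 + 2 / real n) ^ n"
    by (simp add: power_one_over)
  have "1 / (1 + 2 / real n) ^ n \<le> 1 / 3"
    by (rule divide_left_mono) (use \<open>3 \<le> _\<close> in auto)
  then show ?thesis using e by simp
qed



lemma arith_aux: "6 * k \<le> (N::nat) \<Longrightarrow> d \<le> k \<Longrightarrow> 3 * (3 * k) + 2 * (d + 1) \<le> 2 * N + 2"
  by simp

theorem theorem4:
  fixes P :: "'a measure"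
    and X :: "'a \<Rightarrow> 'd::euclidean_space"
    and Xs :: "nat \<Rightarrow> 'a \<Rightarrow> 'd"
    and M :: real and n N :: nat
  assumes "prob_space P"
    and "X \<in> borel_measurable P"
    and "integrable P X"
    and "integral\<^sup>L P X = 0"
    and "M > 0"
    and "AE \<omega> in P. norm (X \<omega>) \<le> M"
    and "n > 0" and "N > 0"
    and "N \<ge> 6 * DIM('d) * n"
    and "prob_space.indep_vars P (\<lambda>_. borel) Xs {..<N}"
    and "\<forall>i<N. distr P borel (Xs i) = distr P borel X"
  shows "measure P {\<omega> \<in> space P.
            infdist 0 (convex hull ((\<lambda>i. Xs i \<omega>) ` {..<N})) \<le> 2 * M / real n}
         > 1 - 1 / 2 ^ DIM('d)"
proof -
  note P = assms(1) and Xm = assms(2) and Xi = assms(3) and X0 = assms(4) and Mp = assms(5)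
    and bnd = assms(6) and np = assms(7) and Np = assms(8) and NN = assms(9)
    and ind = assms(10) and dist = assms(11)
  interpret prob_space P by (rule P)
  define d where "d = DIM('d)"
  define I where "I = {..<N}"
  define m where "m = 3 * d * n"
  define r where "r = 2 * M / real n"
  define c where "c = real n / (real n + 2)"
  define \<mu> where "\<mu> = distr P borel X"
  have d1: "1 \<le> d" by (simp add: d_def DIM_positive Suc_le_eq)
  have r0: "0 < r" using Mp np by (simp add: r_def)
  have c0: "0 \<le> c" by (simp add: c_def)
  have mu: "prob_space \<mu>" "sets \<mu> = sets borel"
    using Xm by (auto simp: \<mu>_def intro!: prob_space_distr)
  have hs: "measure \<mu> {y. r < inner u y} \<le> c" if "norm u = 1" for u :: 'd
  proof -
    have "measure \<mu> {y. r < inner u y} \<le> M / (M + r)"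
      unfolding \<mu>_def by (rule halfspace_prob[OF P Xm Xi X0 Mp bnd that r0])
    also have "M / (M + r) = c"
    proof -
      have e1: "M + r = M * (real n + 2) / real n" using np by (simp add: r_def field_simps)
      have "M / (M * (real n + 2) / real n) = (M * real n) / (M * (real n + 2))" by simp
      also have "\<dots> = real n / (real n + 2)" using Mp by simp
      finally show ?thesis using e1 by (simp add: c_def)
    qed
    finally show ?thesis .
  qed
  have dn: "d \<le> d * n" using np by simp
  have k1: "1 \<le> d * n" using np d1 by simp
  have a6: "6 * d * n = 6 * (d * n)" "3 * d * n = 3 * (d * n)" by simp_all
  have NN': "6 * (d * n) \<le> N" using NN a6 by (simp add: d_def)
  have "m + (d + 1) \<le> N" using NN' dn k1 unfolding m_def a6 by linarith
  then have mD: "m + (DIM('d) + 1) \<le> N" by (simp add: d_def)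
  have finI: "finite I" "card I = N" by (auto simp: I_def)
  let ?Q = "Pi\<^sub>M I (\<lambda>_. \<mu>)"
  define F where "F = {x\<in>space ?Q. r < rho I x}"
  have FB: "real ((N - (d + 1)) choose m) * measure ?Q F \<le> real (N choose m) * c ^ m"
    using F_bound[OF mu hs r0 c0 finI mD] by (simp add: F_def d_def)
  have bin: "(N choose m) \<le> 3 ^ (d + 1) * ((N - (d + 1)) choose m)"
  proof -
    have h1: "3 * m + 2 * (d + 1) \<le> 2 * N + 2" unfolding m_def a6 using arith_aux[OF NN' dn] by simp
    have h2: "d + 1 \<le> N" using NN' dn k1 by linarith
    show ?thesis by (rule binom_iter[OF h1 h2])
  qed
  have bpos: "0 < (N - (d + 1)) choose m" using mD by (simp add: d_def)
  have cm: "c ^ m \<le> (1 / 3) ^ (3 * d)"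
  proof -
    have "c ^ m = (c ^ n) ^ (3 * d)" by (simp add: m_def power_mult[symmetric] mult.commute)
    also have "\<dots> \<le> (1 / 3) ^ (3 * d)"
      using cn_bound[OF np] c0 by (intro power_mono) (auto simp: c_def)
    finally show ?thesis .
  qed
  define B where "B = (N - (d + 1)) choose m"
  have step1: "real (N choose m) * c ^ m \<le> real (3 ^ (d + 1) * B) * c ^ m"
  proof (rule mult_right_mono)
    show "real (N choose m) \<le> real (3 ^ (d + 1) * B)" unfolding of_nat_le_iff B_def by (rule bin)
    show "0 \<le> c ^ m" using c0 by simp
  qed
  have "real (3 ^ (d + 1) * B) * c ^ m = real B * (3 ^ (d + 1) * c ^ m)" by simp
  then have "real B * measure ?Q F \<le> real B * (3 ^ (d + 1) * c ^ m)"
    using FB step1 unfolding B_def by linarith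
  then have "measure ?Q F \<le> 3 ^ (d + 1) * c ^ m" using bpos unfolding B_def by (simp add: mult_le_cancel_left_pos)
  also have "\<dots> \<le> 3 ^ (d + 1) * (1 / 3) ^ (3 * d)" using cm by simp
  also have "\<dots> = 3 / 9 ^ d"
  proof -
    have p3: "(3::real) ^ (3 * d) = 3 ^ d * 9 ^ d"
      by (simp add: power_mult power_mult_distrib[symmetric])
    have "(3::real) ^ (d + 1) * (1 / 3) ^ (3 * d) = 3 * 3 ^ d / 3 ^ (3 * d)"
      by (simp add: power_one_over)
    also have "\<dots> = 3 / 9 ^ d" unfolding p3 by simp
    finally show ?thesis .
  qed
  also have "\<dots> < 1 / 2 ^ d"
  proof -
    have "real (3 * 2 ^ d) < real (9 ^ d)" using pow_ineq[OF d1] by (simp only: of_nat_less_iff)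
    then show ?thesis by (simp add: field_simps)
  qed
  finally have QF: "measure ?Q F < 1 / 2 ^ d" .
  have rv: "random_variable borel (Xs i)" if "i \<in> I" for i
    using ind that by (auto simp: indep_vars_def I_def)
  have Ine: "I \<noteq> {}" using Np by (auto simp: I_def)
  define Y where "Y = (\<lambda>\<omega>. \<lambda>i\<in>I. Xs i \<omega>)"
  have Ym: "Y \<in> measurable P (Pi\<^sub>M I (\<lambda>_. borel))"
    unfolding Y_def using rv by (intro measurable_restrict) auto
  have "distr P (Pi\<^sub>M I (\<lambda>_. borel)) Y = Pi\<^sub>M I (\<lambda>i. distr P borel (Xs i))"
    using indep_vars_iff_distr_eq_PiM'[OF Ine rv] ind by (simp add: Y_def I_def)
  also have "\<dots> = ?Q" using dist by (intro PiM_cong) (auto simp: I_def \<mu>_def)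
  finally have DY: "distr P (Pi\<^sub>M I (\<lambda>_. borel)) Y = ?Q" .
  interpret PQ: prob_space ?Q by (rule prob_space_PiM) (use mu in auto)
  have mI: "rho I \<in> borel_measurable (Pi\<^sub>M I (\<lambda>_. (borel::'d measure)))"
    by (rule rho_measurable[OF finI(1) Ine order_refl])
  define G where "G = {x\<in>space (Pi\<^sub>M I (\<lambda>_. (borel::'d measure))). rho I x \<le> r}"
  have Gm: "G \<in> sets (Pi\<^sub>M I (\<lambda>_. (borel::'d measure)))"
    unfolding G_def using borel_measurable_le[OF mI borel_measurable_const] by simp
  have spQ: "space ?Q = space (Pi\<^sub>M I (\<lambda>_. (borel::'d measure)))"
    using mu(2) by (intro sets_eq_imp_space_eq sets_PiM_cong) auto
  have setS: "{\<omega> \<in> space P. infdist 0 (convex hull ((\<lambda>i. Xs i \<omega>) ` {..<N})) \<le> 2 * M / real n}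
      = Y -` G \<inter> space P"
  proof -
    have "Y \<omega> \<in> space (Pi\<^sub>M I (\<lambda>_. (borel::'d measure)))" if "\<omega> \<in> space P" for \<omega>
      using measurable_space[OF Ym that] .
    moreover have "rho I (Y \<omega>) = infdist 0 (convex hull ((\<lambda>i. Xs i \<omega>) ` {..<N}))" for \<omega>
    proof -
      have "Y \<omega> ` I = (\<lambda>i. Xs i \<omega>) ` I" by (auto simp: Y_def)
      then show ?thesis by (simp add: rho_def I_def)
    qed
    ultimately show ?thesis by (auto simp: G_def r_def)
  qed
  have GF: "G = space ?Q - F" by (auto simp: G_def F_def spQ)
  have mIQ: "rho I \<in> borel_measurable ?Q"
    using mI by (simp add: measurable_cong_sets[OF sets_PiM_cong[OF refl, of _ "\<lambda>_. \<mu>" "\<lambda>_. borel"] refl] mu(2))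
  have Fm: "F \<in> PQ.events" unfolding F_def using borel_measurable_less[OF borel_measurable_const mIQ] by simp
  have "measure P (Y -` G \<inter> space P) = measure (distr P (Pi\<^sub>M I (\<lambda>_. borel)) Y) G"
    by (rule measure_distr[OF Ym Gm, symmetric])
  also have "\<dots> = measure ?Q G" by (simp add: DY)
  also have "\<dots> = 1 - measure ?Q F" unfolding GF by (rule PQ.prob_compl[OF Fm])
  finally have eqP: "measure P (Y -` G \<inter> space P) = 1 - measure ?Q F" .
  have QF': "measure ?Q F < 1 / 2 ^ DIM('d)" using QF by (simp only: d_def)
  have eqS: "measure P {\<omega> \<in> space P. infdist 0 (convex hull ((\<lambda>i. Xs i \<omega>) ` {..<N})) \<le> 2 * M / real n}
      = 1 - measure ?Q F"
    by (rule trans[OF arg_cong[where f="measure P", OF setS] eqP])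
  show ?thesis unfolding eqS by (rule diff_strict_left_mono[OF QF'])
qed


end
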